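(* Let $m\ge2$ and let $\mathbb N$ be the directed cycle $1\to2\to\cdots\to m\to1$, the arc from $i-1$ to $i$ (vertex $0$ being vertex $m$) carrying a real matrix $C_i$ with $n$ columns. There exist matrices $C_1,\dots,C_m$ with $\ker C_i\neq 0$ for all $i$ such that $\bar{\mathbb N}$ is well-configured (i.e. $C_ix_i=C_ix_{i-1}$ for all $i$, with $x_0:=x_m$, implies $x_1=\cdots=x_m$ for all $x_1,\dots,x_m\in\mathbb R^n$) if and only if $m\le n$.
   Context: $\bar{\mathbb N}$ denotes the graph $\mathbb N$ together with the matrices assigned to its arcs; well-configuredness is as described in the claim. *)

theory Defs
  imports "Jordan_Normal_Form.Matrix_Kernel"
begin

definition cycle_pred :: "nat \<Rightarrow> nat \<Rightarrow> nat" where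
  "cycle_pred m i = (if i = 1 then m else i - 1)"

definition well_configured_cycle :: "nat \<Rightarrow> nat \<Rightarrow> (nat \<Rightarrow> real mat) \<Rightarrow> bool" where
  "well_configured_cycle m n C \<longleftrightarrow>
     (\<forall>x :: nat \<Rightarrow> real vec.
        (\<forall>i\<in>{1..m}. x i \<in> carrier_vec n) \<longrightarrow>
        (\<forall>i\<in>{1..m}. C i *\<^sub>v x i = C i *\<^sub>v x (cycle_pred m i)) \<longrightarrow>
        (\<forall>i\<in>{1..m}. \<forall>j\<in>{1..m}. x i = x j))"

end

theory Submission
  imports Defs
begin

lemma chain_eq:
  fixes f :: "nat \<Rightarrow> 'b" and a b i :: nat
  assumes "\<forall>i. a < i \<and> i \<le> b \<longrightarrow> f i = f (i - 1)"
  shows "a \<le> i \<Longrightarrow> i \<le> b \<Longrightarrow> f i = f a"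
proof (induction i rule: dec_induct)
  case base then show ?case by simp
next
  case (step k)
  have "a < Suc k \<and> Suc k \<le> b" using step by auto
  then have "f (Suc k) = f (Suc k - 1)" using assms by blast
  then have "f (Suc k) = f k" by simp
  then show ?case using step by simp
qed

lemma cyc:
  fixes f :: "nat \<Rightarrow> 'b"
  assumes m: "m \<ge> 1" and s: "s \<in> {1..m}"
    and h: "\<forall>i\<in>{1..m}. i \<noteq> s \<longrightarrow> f i = f (cycle_pred m i)"
  shows "\<forall>i\<in>{1..m}. f i = f s"
proof
  fix i assume i: "i \<in> {1..m}"
  have gen: "f i = f (i - 1)" if "i \<in> {1..m}" "i \<noteq> s" "i \<noteq> 1" for i
  proof -
    have "f i = f (cycle_pred m i)" using h that(1,2) by blast
    moreover have "cycle_pred m i = i - 1" using that(3) by (simp add: cycle_pred_def)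
    ultimately show ?thesis by simp
  qed
  have c1: "\<forall>i. s < i \<and> i \<le> m \<longrightarrow> f i = f (i - 1)"
  proof (intro allI impI)
    fix i assume a: "s < i \<and> i \<le> m"
    then have "i \<in> {1..m}" "i \<noteq> s" "i \<noteq> 1" using s by auto
    then show "f i = f (i - 1)" by (rule gen)
  qed
  have c2: "\<forall>i. 1 < i \<and> i \<le> s - 1 \<longrightarrow> f i = f (i - 1)"
  proof (intro allI impI)
    fix i assume a: "1 < i \<and> i \<le> s - 1"
    then have "i \<in> {1..m}" "i \<noteq> s" "i \<noteq> 1" using s by auto
    then show "f i = f (i - 1)" by (rule gen)
  qed
  show "f i = f s"
  proof (cases "s \<le> i")
    case True
    then show ?thesis using chain_eq[OF c1, of i] i by auto
  next
    case False
    then have "f i = f 1" using chain_eq[OF c2, of i] i by auto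
    also have "f 1 = f m"
    proof -
      have "1 \<in> {1..m}" "1 \<noteq> s" using m False i by auto
      then have "f 1 = f (cycle_pred m 1)" using h by blast
      then show ?thesis by (simp add: cycle_pred_def)
    qed
    also have "f m = f s" using chain_eq[OF c1, of m] s by auto
    finally show ?thesis .
  qed
qed

definition Cex :: "nat \<Rightarrow> nat \<Rightarrow> real mat" where
  "Cex n i = mat n n (\<lambda>(a,b). if a = b \<and> a \<noteq> i - 1 then 1 else 0)"

lemma Cex_carrier: "Cex n i \<in> carrier_mat n n"
  by (simp add: Cex_def)

lemma Cex_dims[simp]: "dim_row (Cex n i) = n" "dim_col (Cex n i) = n"
  by (simp_all add: Cex_def)

lemma Cex_mult:
  assumes v: "v \<in> carrier_vec n" and a: "a < n"
  shows "(Cex n i *\<^sub>v v) $ a = (if a = i - 1 then 0 else v $ a)"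
proof -
  have "(Cex n i *\<^sub>v v) $ a = (\<Sum>b<n. (if a = b \<and> a \<noteq> i - 1 then 1 else 0) * v $ b)"
    using v a by (simp add: Cex_def scalar_prod_def row_def lessThan_atLeast0)
  also have "\<dots> = (\<Sum>b<n. if b = a then (if a = i - 1 then 0 else v $ a) else 0)"
    by (rule sum.cong) auto
  also have "\<dots> = (if a = i - 1 then 0 else v $ a)" using a by simp
  finally show ?thesis .
qed

lemma indep:
  assumes wc: "well_configured_cycle m n C" and m: "m \<ge> 1"
    and dim: "\<forall>i\<in>{1..m}. dim_col (C i) = n"
    and d: "\<forall>i\<in>{1..m}. d i \<in> mat_kernel (C i)"
    and s: "\<forall>k<n. (\<Sum>i=1..m. d i $ k) = 0"
  shows "\<forall>i\<in>{1..m}. d i = 0\<^sub>v n"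
proof -
  define x where "x j = vec n (\<lambda>k. \<Sum>i=1..j. d i $ k)" for j
  have xc: "x j \<in> carrier_vec n" for j unfolding x_def by simp
  have dc: "d i \<in> carrier_vec n" if "i \<in> {1..m}" for i
    using d dim that unfolding mat_kernel_def by auto
  have step: "x i $ k = x (cycle_pred m i) $ k + d i $ k" if i: "i \<in> {1..m}" and k: "k < n" for i k
  proof (cases "i = 1")
    case True
    then show ?thesis using s k by (simp add: x_def cycle_pred_def)
  next
    case False
    then obtain j where j: "i = Suc j" "j \<ge> 1" using i by (cases i) auto
    then show ?thesis using k False by (simp add: x_def cycle_pred_def)
  qed
  have dx: "dim_vec (x j) = n" for j using xc[of j] by (rule carrier_vecD)
  have dd: "dim_vec (d i) = n" if "i \<in> {1..m}" for i using dc[OF that] by (rule carrier_vecD)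
  have stepv: "x i = x (cycle_pred m i) + d i" if i: "i \<in> {1..m}" for i
  proof (rule eq_vecI)
    show "dim_vec (x i) = dim_vec (x (cycle_pred m i) + d i)"
      unfolding index_add_vec(2) dx dd[OF i] ..
    fix k assume "k < dim_vec (x (cycle_pred m i) + d i)"
    then have k: "k < n" unfolding index_add_vec(2) dd[OF i] .
    have "(x (cycle_pred m i) + d i) $ k = x (cycle_pred m i) $ k + d i $ k"
      by (rule index_add_vec(1)) (simp only: dd[OF i] k)
    then show "x i $ k = (x (cycle_pred m i) + d i) $ k" using step[OF i k] by simp
  qed
  have "\<forall>i\<in>{1..m}. C i *\<^sub>v x i = C i *\<^sub>v x (cycle_pred m i)"
  proof
    fix i assume i: "i \<in> {1..m}"
    have dci: "dim_col (C i) = n" using dim i by blast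
    have Cc: "C i \<in> carrier_mat (dim_row (C i)) n" by (rule carrier_matI[OF refl dci])
    have "C i *\<^sub>v d i = 0\<^sub>v (dim_row (C i))" using d i unfolding mat_kernel_def by auto
    note kern = this
    have "C i *\<^sub>v x i = C i *\<^sub>v (x (cycle_pred m i) + d i)" using stepv[OF i] by (rule arg_cong)
    also have "\<dots> = C i *\<^sub>v x (cycle_pred m i) + C i *\<^sub>v d i"
      by (rule mult_add_distrib_mat_vec[OF Cc xc dc[OF i]])
    also have "\<dots> = C i *\<^sub>v x (cycle_pred m i) + 0\<^sub>v (dim_row (C i))" unfolding kern ..
    also have "\<dots> = C i *\<^sub>v x (cycle_pred m i)"
      by (rule right_zero_vec[OF mult_mat_vec_carrier[OF Cc xc]])
    finally show "C i *\<^sub>v x i = C i *\<^sub>v x (cycle_pred m i)" .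
  qed
  moreover have "(\<forall>i\<in>{1..m}. x i \<in> carrier_vec n) \<longrightarrow>
        (\<forall>i\<in>{1..m}. C i *\<^sub>v x i = C i *\<^sub>v x (cycle_pred m i)) \<longrightarrow>
        (\<forall>i\<in>{1..m}. \<forall>j\<in>{1..m}. x i = x j)"
    using wc[unfolded well_configured_cycle_def] by (rule spec)
  moreover have "\<forall>i\<in>{1..m}. x i \<in> carrier_vec n" using xc by blast
  ultimately have eq: "\<forall>i\<in>{1..m}. \<forall>j\<in>{1..m}. x i = x j" by blast
  show ?thesis
  proof
    fix i assume i: "i \<in> {1..m}"
    have pi: "cycle_pred m i \<in> {1..m}" using i by (auto simp: cycle_pred_def)
    show "d i = 0\<^sub>v n"
    proof (rule eq_vecI)
      show "dim_vec (d i) = dim_vec (0\<^sub>v n)" using dc[OF i] by simp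
      fix k assume "k < dim_vec (0\<^sub>v n)"
      then have k: "k < n" by simp
      have "x i = x (cycle_pred m i)" using eq i pi by blast
      then have "x i $ k = x (cycle_pred m i) $ k" by simp
      then show "d i $ k = 0\<^sub>v n $ k" using step[OF i k] k by simp
    qed
  qed
qed

lemma coef:
  assumes wc: "well_configured_cycle m n C" and m: "m \<ge> 1"
    and dim: "\<forall>i\<in>{1..m}. dim_col (C i) = n"
    and v: "\<forall>i\<in>{1..m}. v i \<in> mat_kernel (C i) \<and> v i \<noteq> 0\<^sub>v n"
    and s: "\<forall>k<n. (\<Sum>i=1..m. c i * v i $ k) = 0"
  shows "\<forall>i\<in>{1..m}. c i = (0::real)"
proof -
  have vc: "v i \<in> carrier_vec n" if "i \<in> {1..m}" for i
    using v dim that unfolding mat_kernel_def by auto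
  have "\<forall>i\<in>{1..m}. c i \<cdot>\<^sub>v v i \<in> mat_kernel (C i)"
  proof
    fix i assume i: "i \<in> {1..m}"
    have dci: "dim_col (C i) = n" using dim i by blast
    have Cc: "C i \<in> carrier_mat (dim_row (C i)) n" by (rule carrier_matI[OF refl dci])
    have "C i *\<^sub>v v i = 0\<^sub>v (dim_row (C i))" using v i unfolding mat_kernel_def by auto
    then have "C i *\<^sub>v (c i \<cdot>\<^sub>v v i) = 0\<^sub>v (dim_row (C i))"
      using mult_mat_vec[OF Cc vc[OF i]] by auto
    then show "c i \<cdot>\<^sub>v v i \<in> mat_kernel (C i)"
      using vc[OF i] dim i unfolding mat_kernel_def by auto
  qed
  moreover have "\<forall>k<n. (\<Sum>i=1..m. (c i \<cdot>\<^sub>v v i) $ k) = 0"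
  proof (intro allI impI)
    fix k assume k: "k < n"
    have "(\<Sum>i=1..m. (c i \<cdot>\<^sub>v v i) $ k) = (\<Sum>i=1..m. c i * v i $ k)"
    proof (rule sum.cong[OF refl])
      fix i assume "i \<in> {1..m}"
      then have "dim_vec (v i) = n" using vc carrier_vecD by blast
      then show "(c i \<cdot>\<^sub>v v i) $ k = c i * v i $ k" using k by simp
    qed
    then show "(\<Sum>i=1..m. (c i \<cdot>\<^sub>v v i) $ k) = 0" using s k by simp
  qed
  ultimately have z: "\<forall>i\<in>{1..m}. c i \<cdot>\<^sub>v v i = 0\<^sub>v n"
    by (rule indep[OF wc m dim, of "\<lambda>i. c i \<cdot>\<^sub>v v i"])
  show ?thesis
  proof (rule ballI, rule ccontr)
    fix i assume i: "i \<in> {1..m}" and ci: "c i \<noteq> 0"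
    have "v i = 0\<^sub>v n"
    proof (rule eq_vecI)
      show "dim_vec (v i) = dim_vec (0\<^sub>v n)" using vc[OF i] by simp
      fix k assume "k < dim_vec (0\<^sub>v n)"
      then have k: "k < n" by simp
      have "(c i \<cdot>\<^sub>v v i) $ k = 0" using z i k by simp
      then have "c i * v i $ k = 0" using vc[OF i] k by simp
      then show "v i $ k = 0\<^sub>v n $ k" using ci k by simp
    qed
    then show False using v i by blast
  qed
qed

lemma forward:
  assumes m: "m \<ge> 1" and wc: "well_configured_cycle m n C"
    and h: "\<forall>i\<in>{1..m}. dim_col (C i) = n \<and> mat_kernel (C i) \<noteq> {0\<^sub>v n}"
  shows "m \<le> n"
proof -
  have dim: "\<forall>i\<in>{1..m}. dim_col (C i) = n" using h by blast
  have "\<forall>i\<in>{1..m}. \<exists>w. w \<in> mat_kernel (C i) \<and> w \<noteq> 0\<^sub>v n"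
  proof
    fix i assume i: "i \<in> {1..m}"
    have "C i *\<^sub>v 0\<^sub>v n = 0\<^sub>v (dim_row (C i))"
      by (rule eq_vecI) (auto simp: scalar_prod_def)
    then have "0\<^sub>v n \<in> mat_kernel (C i)" using dim i unfolding mat_kernel_def
      by auto
    then show "\<exists>w. w \<in> mat_kernel (C i) \<and> w \<noteq> 0\<^sub>v n" using h i by blast
  qed
  then obtain v where v: "\<forall>i\<in>{1..m}. v i \<in> mat_kernel (C i) \<and> v i \<noteq> 0\<^sub>v n"
    by metis
  have vc: "v i \<in> carrier_vec n" if "i \<in> {1..m}" for i
    using v dim that unfolding mat_kernel_def by auto
  have inj: "inj_on v {1..m}"
  proof (rule inj_onI, rule ccontr)
    fix i j assume i: "i \<in> {1..m}" and j: "j \<in> {1..m}" and eq: "v i = v j" and ne: "i \<noteq> j"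
    define c where "c l = (if l = i then 1 else if l = j then -1 else (0::real))" for l
    have "\<forall>k<n. (\<Sum>l=1..m. c l * v l $ k) = 0"
    proof (intro allI impI)
      fix k assume k: "k < n"
      have "(\<Sum>l=1..m. c l * v l $ k) = (\<Sum>l=1..m. (if l = i then v i $ k else 0) - (if l = j then v i $ k else 0))"
        by (rule sum.cong) (use eq ne in \<open>auto simp: c_def\<close>)
      also have "\<dots> = 0" using i j by (simp add: sum_subtractf)
      finally show "(\<Sum>l=1..m. c l * v l $ k) = 0" .
    qed
    note cz = coef[OF wc m dim v this]
    have "c i = 0" using cz i by blast
    then show False by (simp add: c_def)
  qed
  interpret V: vec_space "TYPE(real)" n .
  define S where "S = v ` {1..m}"
  have Sc: "S \<subseteq> carrier_vec n" using vc by (auto simp: S_def)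
  have lc0: "\<forall>w\<in>S. a w = 0"
    if lc: "V.lincomb a S = 0\<^sub>v n" for a
  proof -
    have "\<forall>k<n. (\<Sum>l=1..m. a (v l) * v l $ k) = 0"
    proof (intro allI impI)
      fix k assume k: "k < n"
      have "(\<Sum>l=1..m. a (v l) * v l $ k) = (\<Sum>w\<in>S. a w * w $ k)"
        using sum.reindex[OF inj, of "\<lambda>w. a w * w $ k"] unfolding S_def by (simp add: comp_def)
      also have "\<dots> = V.lincomb a S $ k"
        using V.lincomb_index[OF k, of S a] Sc by (simp add: module_vec_simps)
      also have "\<dots> = 0" using lc k by (simp add: module_vec_simps)
      finally show "(\<Sum>l=1..m. a (v l) * v l $ k) = 0" .
    qed
    then have "\<forall>l\<in>{1..m}. a (v l) = 0" by (rule coef[OF wc m dim v])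
    then show ?thesis by (auto simp: S_def)
  qed
  have fS: "finite S" by (simp add: S_def)
  have li: "V.lin_indpt S"
    by (rule V.finite_lin_indpt2[OF fS Sc]) (simp add: lc0)
  have "card S \<le> V.dim" using V.li_le_dim(2)[OF V.fin_dim Sc li] .
  moreover have "card S = m" unfolding S_def using card_image[OF inj] by simp
  ultimately show ?thesis using V.dim_is_n by linarith
qed

lemma backward:
  assumes m: "m \<ge> 1" and mn: "m \<le> n"
  shows "\<exists>C :: nat \<Rightarrow> real mat.
            (\<forall>i\<in>{1..m}. dim_col (C i) = n \<and> mat_kernel (C i) \<noteq> {0\<^sub>v n}) \<and>
            well_configured_cycle m n C"
proof (intro exI conjI ballI)
  fix i assume i: "i \<in> {1..m}"
  show "dim_col (Cex n i) = n" by simp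
  have il: "i - 1 < n" using i mn by auto
  have uc: "(unit_vec n (i - 1) :: real vec) \<in> carrier_vec n" by simp
  have "Cex n i *\<^sub>v unit_vec n (i - 1) = 0\<^sub>v n"
  proof (rule eq_vecI)
    show "dim_vec (Cex n i *\<^sub>v unit_vec n (i - 1)) = dim_vec (0\<^sub>v n)" by simp
    fix a assume "a < dim_vec (0\<^sub>v n)"
    then have a: "a < n" by simp
    have z: "0\<^sub>v n $ a = (0::real)" using a by (rule index_zero_vec(1))
    have c: "(Cex n i *\<^sub>v unit_vec n (i - 1)) $ a = (if a = i - 1 then 0 else unit_vec n (i - 1) $ a)"
      by (rule Cex_mult[OF uc a])
    have u: "unit_vec n (i - 1) $ a = (if a = i - 1 then 1 else (0::real))"
      by (rule index_unit_vec(1)[OF il a])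
    show "(Cex n i *\<^sub>v unit_vec n (i - 1)) $ a = 0\<^sub>v n $ a"
      unfolding c z u by simp
  qed
  then have "unit_vec n (i - 1) \<in> mat_kernel (Cex n i)"
    by (rule mat_kernelI[OF Cex_carrier uc])
  moreover have "unit_vec n (i - 1) \<noteq> (0\<^sub>v n :: real vec)"
  proof
    assume "unit_vec n (i - 1) = (0\<^sub>v n :: real vec)"
    moreover have "unit_vec n (i - 1) $ (i - 1) = (1::real)" using il by simp
    moreover have "0\<^sub>v n $ (i - 1) = (0::real)" using il by simp
    ultimately show False by (metis zero_neq_one)
  qed
  ultimately show "mat_kernel (Cex n i) \<noteq> {0\<^sub>v n}" by blast
next
  show "well_configured_cycle m n (Cex n)"
    unfolding well_configured_cycle_def
  proof (intro allI impI ballI)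
    fix x :: "nat \<Rightarrow> real vec" and i j
    assume xc: "\<forall>i\<in>{1..m}. x i \<in> carrier_vec n"
      and h: "\<forall>i\<in>{1..m}. Cex n i *\<^sub>v x i = Cex n i *\<^sub>v x (cycle_pred m i)"
      and i: "i \<in> {1..m}" and j: "j \<in> {1..m}"
    have comp: "\<forall>l\<in>{1..m}. x l $ k = x j $ k" if k: "k < n" for k
    proof -
      define s where "s = (if k + 1 \<le> m then k + 1 else 1)"
      have s: "s \<in> {1..m}" using m by (auto simp: s_def)
      have "\<forall>l\<in>{1..m}. l \<noteq> s \<longrightarrow> x l $ k = x (cycle_pred m l) $ k"
      proof (intro ballI impI)
        fix l assume l: "l \<in> {1..m}" and ls: "l \<noteq> s"
        have pl: "cycle_pred m l \<in> {1..m}" using l by (auto simp: cycle_pred_def)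
        have kl: "k \<noteq> l - 1" using ls l by (auto simp: s_def split: if_splits)
        have eq: "Cex n l *\<^sub>v x l = Cex n l *\<^sub>v x (cycle_pred m l)" using h l by blast
        have xl: "x l \<in> carrier_vec n" using xc l by blast
        have xp: "x (cycle_pred m l) \<in> carrier_vec n" using xc pl by blast
        have e1: "(Cex n l *\<^sub>v x l) $ k = x l $ k"
          using Cex_mult[OF xl k, of l] kl by (simp only: if_False)
        have e2: "(Cex n l *\<^sub>v x (cycle_pred m l)) $ k = x (cycle_pred m l) $ k"
          using Cex_mult[OF xp k, of l] kl by (simp only: if_False)
        show "x l $ k = x (cycle_pred m l) $ k"
          using e1 e2 eq by metis
      qed
      then have cy: "\<forall>l\<in>{1..m}. x l $ k = x s $ k" by (rule cyc[of m s "\<lambda>i. x i $ k", OF m s])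
      show ?thesis
      proof
        fix l assume l: "l \<in> {1..m}"
        have "x l $ k = x s $ k" using cy l by blast
        moreover have "x j $ k = x s $ k" using cy j by blast
        ultimately show "x l $ k = x j $ k" by simp
      qed
    qed
    have xi1: "x i \<in> carrier_vec n" using xc i by blast
    have xj1: "x j \<in> carrier_vec n" using xc j by blast
    have xi: "dim_vec (x i) = n" using carrier_vecD[OF xi1] .
    have xj: "dim_vec (x j) = n" using carrier_vecD[OF xj1] .
    show "x i = x j"
    proof (rule eq_vecI)
      show "dim_vec (x i) = dim_vec (x j)" using xi xj by simp
      fix k assume "k < dim_vec (x j)"
      then have k: "k < n" using xj by simp
      show "x i $ k = x j $ k" using comp[OF k] i by blast
    qed
  qed
qed

theorem corollary1:
  fixes m n :: nat
  assumes "m \<ge> 2"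
  shows "(\<exists>C :: nat \<Rightarrow> real mat.
            (\<forall>i\<in>{1..m}. dim_col (C i) = n \<and> mat_kernel (C i) \<noteq> {0\<^sub>v n}) \<and>
            well_configured_cycle m n C)
         \<longleftrightarrow> m \<le> n"
proof -
  have m: "m \<ge> 1" using assms by simp
  show ?thesis using forward[OF m] backward[OF m] by blast
qed

end
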